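(* For every $k\ge1$, $|G_k|=|B_k|/2$.
   Context: Let $C_2=\{e,\sigma\}$ with $\sigma=(1,2)$. Define $B_1=C_2$ and $B_k=B_{k-1}\wr C_2$ for $k>1$, with elements written as wreath recursions $(g_1,g_2)\pi$, $g_1,g_2\in B_{k-1}$, $\pi\in C_2$, and multiplication $(g_1,g_2)\pi\cdot(h_1,h_2)\rho=(g_1h_{\pi(1)},g_2h_{\pi(2)})\pi\rho$. Define $G_1=\{e\}$ and, for $k>1$, $G_k=\{(g_1,g_2)\pi\in B_k : g_1g_2\in G_{k-1}\}$. *)

theory Defs
  imports Main
begin

text \<open>A permutation in C_2 = {e, sigma}
  is encoded by a bool (False = e, True = sigma).  An element (g1,g2)pi of
  B_k = B_{k-1} wr C_2 is encoded as Node g1 g2 pi.  We use the trivial group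
  B_0 = {Leaf}, so that B_1 = B_0 wr C_2 = {Node Leaf Leaf pi} is a copy of C_2.\<close>

datatype wr = Leaf | Node wr wr bool

fun B :: "nat \<Rightarrow> wr set" where
  "B 0 = {Leaf}"
| "B (Suc k) = {Node g1 g2 p | g1 g2 p. g1 \<in> B k \<and> g2 \<in> B k}"

text \<open>Multiplication (g1,g2)pi * (h1,h2)rho = (g1 h_{pi(1)}, g2 h_{pi(2)}) pi rho.\<close>
fun wmult :: "wr \<Rightarrow> wr \<Rightarrow> wr" where
  "wmult (Node g1 g2 p) (Node h1 h2 q) =
     Node (wmult g1 (if p then h2 else h1)) (wmult g2 (if p then h1 else h2)) (p \<noteq> q)"
| "wmult _ _ = Leaf"

fun ident :: "nat \<Rightarrow> wr" where
  "ident 0 = Leaf"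
| "ident (Suc k) = Node (ident k) (ident k) False"

fun G :: "nat \<Rightarrow> wr set" where
  "G 0 = {Leaf}"
| "G (Suc 0) = {ident 1}"
| "G (Suc (Suc k)) = {x \<in> B (Suc (Suc k)).
      (case x of Node g1 g2 p \<Rightarrow> wmult g1 g2 \<in> G (Suc k) | Leaf \<Rightarrow> False)}"

end

theory Submission
  imports Defs
begin

lemma B_fin: "finite (B n)"
proof (induction n)
  case 0 then show ?case by simp
next
  case (Suc n)
  have "B (Suc n) = (\<lambda>(g1,g2,p). Node g1 g2 p) ` (B n \<times> B n \<times> UNIV)"
    by (auto simp: image_iff)
  then show ?case using Suc by simp
qed

lemma B_card: "card (B (Suc n)) = 2 * card (B n) * card (B n)"
proof -
  have e: "B (Suc n) = (\<lambda>(g1,g2,p). Node g1 g2 p) ` (B n \<times> B n \<times> UNIV)"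
    by (auto simp: image_iff)
  have "inj_on (\<lambda>(g1,g2,p). Node g1 g2 p) (B n \<times> B n \<times> (UNIV::bool set))"
    by (auto simp: inj_on_def)
  then have "card (B (Suc n)) = card (B n \<times> B n \<times> (UNIV::bool set))"
    unfolding e by (rule card_image)
  then show ?thesis by (simp add: card_cartesian_product)
qed

lemma closed: "g \<in> B n \<Longrightarrow> h \<in> B n \<Longrightarrow> wmult g h \<in> B n"
proof (induction n arbitrary: g h)
  case 0 then show ?case by simp
next
  case (Suc n)
  then show ?case by auto
qed

lemma inj_mult: "g \<in> B n \<Longrightarrow> h \<in> B n \<Longrightarrow> h' \<in> B n \<Longrightarrow> wmult g h = wmult g h' \<Longrightarrow> h = h'"
proof (induction n arbitrary: g h h')
  case 0 then show ?case by simp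
next
  case (Suc n)
  from Suc.prems obtain g1 g2 p h1 h2 q h1' h2' q' where
    "g = Node g1 g2 p" "h = Node h1 h2 q" "h' = Node h1' h2' q'"
    "g1 \<in> B n" "g2 \<in> B n" "h1 \<in> B n" "h2 \<in> B n" "h1' \<in> B n" "h2' \<in> B n"
    by auto
  note h = this
  have eq: "wmult g1 (if p then h2 else h1) = wmult g1 (if p then h2' else h1')"
     "wmult g2 (if p then h1 else h2) = wmult g2 (if p then h1' else h2')"
     "q = q'"
    using Suc.prems(4) h(1-3) by auto
  show ?case
  proof (cases p)
    case True
    have "h2 = h2'" using eq h Suc.IH True by simp
    moreover have "h1 = h1'" using eq h Suc.IH True by simp
    ultimately show ?thesis using h eq by simp
  next
    case False
    have "h2 = h2'" using eq h Suc.IH False by simp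
    moreover have "h1 = h1'" using eq h Suc.IH False by simp
    ultimately show ?thesis using h eq by simp
  qed
qed

lemma img: "g \<in> B n \<Longrightarrow> wmult g ` B n = B n"
proof -
  assume g: "g \<in> B n"
  have inj: "inj_on (wmult g) (B n)" using inj_mult[OF g] by (auto simp: inj_on_def)
  have sub: "wmult g ` B n \<subseteq> B n" using closed[OF g] by auto
  have "card (wmult g ` B n) = card (B n)" using card_image[OF inj] .
  then show ?thesis using sub B_fin card_subset_eq by blast
qed

lemma G_sub: "G n \<subseteq> B n"
proof (cases n)
  case 0 then show ?thesis by simp
next
  case (Suc m) then show ?thesis
    by (cases m) (auto simp: numeral_2_eq_2)
qed

lemma count: "g \<in> B n \<Longrightarrow> card {h \<in> B n. wmult g h \<in> G n} = card (G n)"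
proof -
  assume g: "g \<in> B n"
  have inj: "inj_on (wmult g) {h \<in> B n. wmult g h \<in> G n}"
    using inj_mult[OF g] by (auto simp: inj_on_def)
  have "wmult g ` {h \<in> B n. wmult g h \<in> G n} = G n"
  proof
    show "wmult g ` {h \<in> B n. wmult g h \<in> G n} \<subseteq> G n" by auto
  next
    show "G n \<subseteq> wmult g ` {h \<in> B n. wmult g h \<in> G n}"
    proof
      fix x assume x: "x \<in> G n"
      then have "x \<in> wmult g ` B n" using img[OF g] G_sub[of n] by auto
      then obtain h where "h \<in> B n" "x = wmult g h" by (auto simp del: B.simps)
      then show "x \<in> wmult g ` {h \<in> B n. wmult g h \<in> G n}" using x by auto
    qed
  qed
  then show ?thesis using card_image[OF inj] by simp
qed

lemma G_card: "card (G (Suc (Suc k))) = 2 * card (B (Suc k)) * card (G (Suc k))"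
proof -
  let ?n = "Suc k"
  let ?S = "Sigma (B ?n) (\<lambda>g1. {h \<in> B ?n. wmult g1 h \<in> G ?n}) \<times> (UNIV::bool set)"
  have e: "G (Suc ?n) = (\<lambda>((g1,g2),p). Node g1 g2 p) ` ?S"
    by (auto simp: image_iff)
  have "inj_on (\<lambda>((g1,g2),p). Node g1 g2 p) ?S"
    by (auto simp: inj_on_def)
  then have "card (G (Suc ?n)) = card ?S" unfolding e by (rule card_image)
  also have "\<dots> = card (Sigma (B ?n) (\<lambda>g1. {h \<in> B ?n. wmult g1 h \<in> G ?n})) * 2"
    by (simp add: card_cartesian_product)
  also have "card (Sigma (B ?n) (\<lambda>g1. {h \<in> B ?n. wmult g1 h \<in> G ?n}))
      = (\<Sum>g1\<in>B ?n. card {h \<in> B ?n. wmult g1 h \<in> G ?n})"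
    by (rule card_SigmaI) (simp_all add: B_fin del: B.simps)
  also have "\<dots> = (\<Sum>g1\<in>B ?n. card (G ?n))"
    by (rule sum.cong) (simp_all add: count del: B.simps)
  finally show ?thesis by simp
qed

theorem mainTheorem11:
  fixes k :: nat
  assumes "k \<ge> 1"
  shows "2 * card (G k) = card (B k)"
  using assms
proof (induction k rule: nat_induct_at_least)
  case base
  have "B 1 = {Node Leaf Leaf False, Node Leaf Leaf True}" by auto
  then show ?case by simp
next
  case (Suc m)
  then obtain j where m: "m = Suc j" by (cases m) auto
  show ?case using Suc.IH unfolding m G_card B_card by simp
qed

end
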